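(* Let $a\in[0,\infty)$, let $\theta:[0,1]\to[0,\infty]$ be a continuous and decreasing function that is not strictly decreasing, and let $\vartheta:[0,\infty]\to[0,1]$ be a continuous and decreasing function such that $O_{\theta,\vartheta}(x,y)=\vartheta(\theta(x)+\theta(y))$ defines an overlap function on $[0,1]^2$ and at least one of the following holds: (1) $\theta(x)=\frac{a}{2}$ if and only if $x=1$; (2) $\vartheta(x)=1$ if and only if $x\in[0,a]$. Then there do not exist a positive continuous t-norm $T$ and a pseudo automorphism $\mathcal{F}$ such that $O_{\theta,\vartheta}(x,y)=\mathcal{F}(T(x,y))$ for all $(x,y)\in[0,1]^2$.
   Context: "Decreasing" means non-increasing and "increasing" means non-decreasing. Arithmetic in $[0,\infty]$ uses $c+\infty=\infty$; continuity on $[0,\infty]$ refers to the usual topology of the extended half-line. An overlap function is a map $O:[0,1]^2\to[0,1]$ that is (O1) commutative, (O2) $O(x,y)=0$ iff $xy=0$, (O3) $O(x,y)=1$ iff $xy=1$, (O4) increasing in each variable, (O5) continuous. A t-norm is a commutative, associative map $T:[0,1]^2\to[0,1]$, increasing in each variable, with $T(x,1)=x$; it is positive if $T(x,y)=0$ implies $x=0$ or $y=0$. A pseudo automorphism is a continuous increasing map $\mathcal{F}:[0,1]\to[0,1]$ with $\mathcal{F}(x)=1$ iff $x=1$ and $\mathcal{F}(x)=0$ iff $x=0$. *)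

theory Defs
  imports "HOL-Analysis.Analysis" "HOL-Library.Extended_Nonnegative_Real"
begin

text \<open>The extended half-line [0,\<infinity>] is modelled by ennreal.
  Functions on [0,1] are real \<Rightarrow> real, only their values on [0,1] matter.\<close>

definition overlap :: "(real \<Rightarrow> real \<Rightarrow> real) \<Rightarrow> bool" where
  "overlap Ov \<longleftrightarrow>
     (\<forall>x\<in>{0..1}. \<forall>y\<in>{0..1}. Ov x y \<in> {0..1}) \<and>
     (\<forall>x\<in>{0..1}. \<forall>y\<in>{0..1}. Ov x y = Ov y x) \<and>
     (\<forall>x\<in>{0..1}. \<forall>y\<in>{0..1}. Ov x y = 0 \<longleftrightarrow> x * y = 0) \<and>
     (\<forall>x\<in>{0..1}. \<forall>y\<in>{0..1}. Ov x y = 1 \<longleftrightarrow> x * y = 1) \<and>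
     (\<forall>x\<in>{0..1}. \<forall>y\<in>{0..1}. \<forall>z\<in>{0..1}. y \<le> z \<longrightarrow> Ov x y \<le> Ov x z \<and> Ov y x \<le> Ov z x) \<and>
     continuous_on ({0..1} \<times> {0..1}) (\<lambda>(x, y). Ov x y)"

definition tnorm :: "(real \<Rightarrow> real \<Rightarrow> real) \<Rightarrow> bool" where
  "tnorm T \<longleftrightarrow>
     (\<forall>x\<in>{0..1}. \<forall>y\<in>{0..1}. T x y \<in> {0..1}) \<and>
     (\<forall>x\<in>{0..1}. \<forall>y\<in>{0..1}. T x y = T y x) \<and>
     (\<forall>x\<in>{0..1}. \<forall>y\<in>{0..1}. \<forall>z\<in>{0..1}. T x (T y z) = T (T x y) z) \<and>
     (\<forall>x\<in>{0..1}. \<forall>y\<in>{0..1}. \<forall>z\<in>{0..1}. y \<le> z \<longrightarrow> T x y \<le> T x z \<and> T y x \<le> T z x) \<and>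
     (\<forall>x\<in>{0..1}. T x 1 = x)"

definition positive_tnorm :: "(real \<Rightarrow> real \<Rightarrow> real) \<Rightarrow> bool" where
  "positive_tnorm T \<longleftrightarrow> tnorm T \<and>
     (\<forall>x\<in>{0..1}. \<forall>y\<in>{0..1}. T x y = 0 \<longrightarrow> x = 0 \<or> y = 0)"

definition pseudo_automorphism :: "(real \<Rightarrow> real) \<Rightarrow> bool" where
  "pseudo_automorphism F \<longleftrightarrow>
     (\<forall>x\<in>{0..1}. F x \<in> {0..1}) \<and>
     continuous_on {0..1} F \<and> mono_on {0..1} F \<and>
     (\<forall>x\<in>{0..1}. F x = 1 \<longleftrightarrow> x = 1) \<and>
     (\<forall>x\<in>{0..1}. F x = 0 \<longleftrightarrow> x = 0)"

end

theory Submission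
  imports Defs
begin
lemma cont_sec1:
  assumes "continuous_on ({0..1} \<times> {0..1}) (\<lambda>(x, y). T x y)" "(u::real) \<in> {0..1}"
  shows "continuous_on {0..1} (\<lambda>y. T u y :: real)"
proof -
  have "continuous_on {0..1} ((\<lambda>(x, y). T x y) \<circ> (\<lambda>y. (u, y)))"
    using assms(2) by (intro continuous_on_compose) (auto intro!: continuous_intros continuous_on_subset[OF assms(1)])
  then show ?thesis by (simp add: o_def)
qed
lemma cont_sec2:
  assumes "continuous_on ({0..1} \<times> {0..1}) (\<lambda>(x, y). T x y)" "(u::real) \<in> {0..1}"
  shows "continuous_on {0..1} (\<lambda>x. T x u :: real)"
proof -
  have "continuous_on {0..1} ((\<lambda>(x, y). T x y) \<circ> (\<lambda>x. (x, u)))"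
    using assms(2) by (intro continuous_on_compose) (auto intro!: continuous_intros continuous_on_subset[OF assms(1)])
  then show ?thesis by (simp add: o_def)
qed

theorem proposition5p2:
  fixes a :: real and \<theta> :: "real \<Rightarrow> ennreal" and \<phi> :: "ennreal \<Rightarrow> real"
  assumes "a \<ge> 0"
    and "continuous_on {0..1} \<theta>"
    and "\<forall>x\<in>{0..1}. \<forall>y\<in>{0..1}. x \<le> y \<longrightarrow> \<theta> y \<le> \<theta> x"
    and "\<exists>x\<in>{0..1}. \<exists>y\<in>{0..1}. x < y \<and> \<theta> x = \<theta> y"
    and "continuous_on UNIV \<phi>"
    and "\<forall>s t. s \<le> t \<longrightarrow> \<phi> t \<le> \<phi> s"
    and "\<forall>t. \<phi> t \<in> {0..1}"
    and "overlap (\<lambda>x y. \<phi> (\<theta> x + \<theta> y))"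
    and "(\<forall>x\<in>{0..1}. \<theta> x = ennreal (a / 2) \<longleftrightarrow> x = 1) \<or>
         (\<forall>t. \<phi> t = 1 \<longleftrightarrow> t \<in> {0..ennreal a})"
  shows "\<not> (\<exists>T F. positive_tnorm T \<and> continuous_on ({0..1} \<times> {0..1}) (\<lambda>(x, y). T x y) \<and>
              pseudo_automorphism F \<and>
              (\<forall>x\<in>{0..1}. \<forall>y\<in>{0..1}. \<phi> (\<theta> x + \<theta> y) = F (T x y)))"
proof
  assume "\<exists>T F. positive_tnorm T \<and> continuous_on ({0..1} \<times> {0..1}) (\<lambda>(x, y). T x y) \<and>
              pseudo_automorphism F \<and>
              (\<forall>x\<in>{0..1}. \<forall>y\<in>{0..1}. \<phi> (\<theta> x + \<theta> y) = F (T x y))"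
  then obtain T F where tn: "tnorm T" and Tc: "continuous_on ({0..1} \<times> {0..1}) (\<lambda>(x, y). T x y)"
    and pa: "pseudo_automorphism F" and rep: "\<And>x y. x\<in>{0..1} \<Longrightarrow> y\<in>{0..1} \<Longrightarrow> \<phi> (\<theta> x + \<theta> y) = F (T x y)"
    unfolding positive_tnorm_def by blast
  have Tr: "\<And>x y. x\<in>{0..1} \<Longrightarrow> y\<in>{0..1} \<Longrightarrow> T x y \<in> {0..1}"
    and Tcomm: "\<And>x y. x\<in>{0..1} \<Longrightarrow> y\<in>{0..1} \<Longrightarrow> T x y = T y x"
    and Tass: "\<And>x y z. x\<in>{0..1} \<Longrightarrow> y\<in>{0..1} \<Longrightarrow> z\<in>{0..1} \<Longrightarrow> T x (T y z) = T (T x y) z"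
    and Tmono: "\<And>x y z. x\<in>{0..1} \<Longrightarrow> y\<in>{0..1} \<Longrightarrow> z\<in>{0..1} \<Longrightarrow> y \<le> z \<Longrightarrow> T x y \<le> T x z \<and> T y x \<le> T z x"
    and T1: "\<And>x. x\<in>{0..1} \<Longrightarrow> T x 1 = x"
    using tn unfolding tnorm_def by blast+
  have Fr: "\<And>x. x\<in>{0..1} \<Longrightarrow> F x \<in> {0..1}" and Fc: "continuous_on {0..1} F"
    and F1: "\<And>x. x\<in>{0..1} \<Longrightarrow> F x = 1 \<longleftrightarrow> x = 1"
    and F0: "\<And>x. x\<in>{0..1} \<Longrightarrow> F x = 0 \<longleftrightarrow> x = 0"
    using pa unfolding pseudo_automorphism_def by blast+
  have O0: "\<And>x y. x\<in>{0..1} \<Longrightarrow> y\<in>{0..1} \<Longrightarrow> \<phi> (\<theta> x + \<theta> y) = 0 \<longleftrightarrow> x * y = 0"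
    and O1: "\<And>x y. x\<in>{0..1} \<Longrightarrow> y\<in>{0..1} \<Longrightarrow> \<phi> (\<theta> x + \<theta> y) = 1 \<longleftrightarrow> x * y = 1"
    using assms(8) unfolding overlap_def by blast+
  have th_mono: "\<And>x y. x\<in>{0..1} \<Longrightarrow> y\<in>{0..1} \<Longrightarrow> x \<le> y \<Longrightarrow> \<theta> y \<le> \<theta> x" using assms(3) by blast
  have ph_mono: "\<And>s t. s \<le> t \<Longrightarrow> \<phi> t \<le> \<phi> s" using assms(6) by blast
  have ph_r: "\<And>t. \<phi> t \<in> {0..1}" using assms(7) by blast
  have FO: "\<And>x. x\<in>{0..1} \<Longrightarrow> F x = \<phi> (\<theta> x + \<theta> 1)"
    using rep T1 by simp
  have T0: "\<And>x. x\<in>{0..1} \<Longrightarrow> T x 0 = 0"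
  proof -
    fix x :: real assume x: "x \<in> {0..1}"
    have "T 0 x \<le> T 0 1" using Tmono[of 0 x 1] x by auto
    moreover have "T 0 1 = 0" using T1[of 0] by simp
    moreover have "T x 0 = T 0 x" using Tcomm[of x 0] x by simp
    ultimately show "T x 0 = 0" using Tr[of x 0] x by force
  qed
  obtain l u where lu: "l \<in> {0..1}" "u \<in> {0..1}" "l < u" "\<theta> l = \<theta> u" using assms(4) by blast
  define v where "v = F u"
  have Fl: "F l = v" unfolding v_def using FO lu by simp
  have v0: "v \<noteq> 0" using F0[of u] lu unfolding v_def by auto
  define S where "S = {z \<in> {0..1}. F z = v}"
  have Scl: "closed S" unfolding S_def by (rule continuous_closed_preimage_constant[OF Fc]) simp
  have "l \<in> S" using Fl lu unfolding S_def by simp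
  define p where "p = Inf S"
  have pS: "p \<in> S" unfolding p_def
    by (rule closed_contains_Inf) (use \<open>l \<in> S\<close> Scl in \<open>auto simp: S_def bdd_below_def\<close>)
  have pmin: "\<And>z. z \<in> S \<Longrightarrow> p \<le> z" unfolding p_def
    by (rule cInf_lower) (auto simp: S_def bdd_below_def)
  have pl: "p \<le> l" using pmin \<open>l \<in> S\<close> by simp
  have p0: "p > 0" using pS v0 F0[of p] unfolding S_def by force
  obtain y where y: "y \<in> {0..1}" "T u y = p"
    using IVT'[of "\<lambda>y. T u y" 0 p 1] cont_sec1[OF Tc lu(2)] T0[of u] T1[of u] lu pl p0 by auto
  have "F (T l y) = v"
    using rep[of l y] rep[of u y] lu y pS unfolding S_def by simp
  hence "T l y \<in> S" using Tr[of l y] lu y unfolding S_def by simp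
  hence "p \<le> T l y" by (rule pmin)
  moreover have "T l y \<le> T u y" using Tmono[of y l u] Tcomm[of l y] Tcomm[of u y] lu y by auto
  ultimately have Tly: "T l y = p" using y by simp
  define z where "z = p"
  obtain w where w: "w \<in> {0..1}" "T u w = l"
    using IVT'[of "\<lambda>y. T u y" 0 l 1] cont_sec1[OF Tc lu(2)] T0[of u] T1[of u] lu by auto
  have w1: "w < 1" using w T1[of u] lu by (cases "w = 1") auto
  have pI: "p \<in> {0..1}" using pS unfolding S_def by simp
  have Twz: "T w p = p"
  proof -
    have "p = T (T u w) y" using Tly w by simp
    also have "\<dots> = T (T w u) y" using Tcomm[of u w] w lu by simp
    also have "\<dots> = T w (T u y)" using Tass[of w u y] w lu y by simp
    finally show ?thesis using y by simp
  qed
  define A where "A = {x \<in> {0..1}. T x p = p}"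
  have Acl: "closed A" unfolding A_def by (rule continuous_closed_preimage_constant[OF cont_sec2[OF Tc pI]]) simp
  define e where "e = Inf A"
  have eA: "e \<in> A" unfolding e_def
    by (rule closed_contains_Inf) (use w Twz Acl in \<open>auto simp: A_def bdd_below_def\<close>)
  have emin: "\<And>x. x \<in> A \<Longrightarrow> e \<le> x" unfolding e_def
    by (rule cInf_lower) (auto simp: A_def bdd_below_def)
  have eI: "e \<in> {0..1}" and Tep: "T e p = p" using eA unfolding A_def by auto
  have e1: "e < 1" using emin[of w] w Twz w1 unfolding A_def by simp
  have "T e p \<le> T e 1" using Tmono[of e p 1] eI pI by auto
  hence pe: "p \<le> e" using Tep T1 eI by simp
  have e0: "e > 0" using pe p0 by simp
  have Tee: "T e e = e"
  proof -
    have "T (T e e) p = T e (T e p)" using Tass[of e e p] eI pI by simp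
    also have "\<dots> = p" using Tep by simp
    finally have "T e e \<in> A" using Tr[of e e] eI unfolding A_def by simp
    hence "e \<le> T e e" by (rule emin)
    moreover have "T e e \<le> T e 1" using Tmono[of e e 1] eI by auto
    ultimately show ?thesis using T1 eI by simp
  qed
  have Tex: "\<And>x. x \<in> {0..e} \<Longrightarrow> T e x = x"
  proof -
    fix x assume x: "x \<in> {0..e}"
    obtain t where t: "t \<in> {0..1}" "T e t = x"
      using IVT'[of "\<lambda>y. T e y" 0 x 1] cont_sec1[OF Tc eI] T0[of e] T1[of e] eI x by auto
    have "T e x = T e (T e t)" using t by simp
    also have "\<dots> = T (T e e) t" using Tass[of e e t] eI t by simp
    finally show "T e x = x" using Tee t by simp
  qed
  have key: "\<And>x. x \<in> {0..e} \<Longrightarrow> \<phi> (\<theta> e + \<theta> x) = \<phi> (\<theta> 1 + \<theta> x)"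
  proof -
    fix x assume x: "x \<in> {0..e}"
    hence xI: "x \<in> {0..1}" using eI by auto
    have "\<phi> (\<theta> e + \<theta> x) = F x" using rep[of e x] Tex[OF x] eI xI by simp
    also have "\<dots> = \<phi> (\<theta> 1 + \<theta> x)" using FO[OF xI] by (simp add: add.commute)
    finally show "\<phi> (\<theta> e + \<theta> x) = \<phi> (\<theta> 1 + \<theta> x)" .
  qed
  have Fe0: "F e > 0" using F0[of e] Fr[of e] eI e0 by auto
  obtain x where x: "x \<in> {0..e}" "F x = F e / 2"
    using IVT'[of F 0 "F e / 2" e] continuous_on_subset[OF Fc, of "{0..e}"] F0[of 0] Fe0 eI by auto
  have xI: "x \<in> {0..1}" using x eI by auto
  have x0: "x > 0" using x F0[of x] xI Fe0 by auto
  have phinf: "\<phi> \<infinity> = 0"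
  proof -
    have "\<phi> (\<theta> 0 + \<theta> 1) = 0" using O0[of 0 1] by simp
    moreover have "\<phi> \<infinity> \<le> \<phi> (\<theta> 0 + \<theta> 1)" by (rule ph_mono) simp
    ultimately show ?thesis using ph_r[of \<infinity>] by auto
  qed
  have thx: "\<theta> x \<noteq> \<infinity>"
  proof
    assume "\<theta> x = \<infinity>"
    hence "\<phi> (\<theta> x + \<theta> x) = 0" using phinf by simp
    thus False using O0[of x x] xI x0 by simp
  qed
  have the: "\<theta> e \<le> \<theta> x" using th_mono[of x e] xI eI x by simp
  have th1: "\<theta> 1 \<le> \<theta> e" using th_mono[of e 1] eI by simp
  have ne1: "\<theta> e \<noteq> \<theta> 1"
  proof
    assume "\<theta> e = \<theta> 1"
    hence "\<phi> (\<theta> e + \<theta> 1) = 1" using O1[of 1 1] by simp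
    thus False using O1[of e 1] eI e1 by simp
  qed
  define tb where "tb = enn2real (\<theta> 1)"
  define te where "te = enn2real (\<theta> e)"
  define tx where "tx = enn2real (\<theta> x)"
  have fe: "\<theta> e \<noteq> \<infinity>" using the thx by (auto simp: top_unique)
  have f1: "\<theta> 1 \<noteq> \<infinity>" using th1 fe by (auto simp: top_unique)
  have Eb: "\<theta> 1 = ennreal tb" using f1 unfolding tb_def by (simp add: ennreal_enn2real_if)
  have Ee: "\<theta> e = ennreal te" using fe unfolding te_def by (simp add: ennreal_enn2real_if)
  have Ex: "\<theta> x = ennreal tx" using thx unfolding tx_def by (simp add: ennreal_enn2real_if)
  have tb0: "tb \<ge> 0" unfolding tb_def by (simp add: ennreal_enn2real_if)
  have tbe: "tb < te" using th1 ne1 Eb Ee tb0 by (metis ennreal_less_iff le_less ennreal_less_zero_iff not_less)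
  have tex: "te \<le> tx" using the Ee Ex tb0 tbe by (simp add: ennreal_le_iff2)
  define D where "D = te - tb"
  have D0: "D > 0" using tbe unfolding D_def by simp
  define \<psi> where "\<psi> r = \<phi> (ennreal r)" for r
  have shift: "\<And>r. tb + te \<le> r \<Longrightarrow> r \<le> tb + tx \<Longrightarrow> \<psi> (r + D) = \<psi> r"
  proof -
    fix r assume r: "tb + te \<le> r" "r \<le> tb + tx"
    define s where "s = r - tb"
    have s: "te \<le> s" "s \<le> tx" using r unfolding s_def by auto
    have cx: "continuous_on {x..e} \<theta>"
      by (rule continuous_on_subset[OF assms(2)]) (use xI eI in auto)
    obtain x' where x': "x \<le> x'" "x' \<le> e" "\<theta> x' = ennreal s"
      using IVT2'[of \<theta> e "ennreal s" x, OF _ _ _ cx] Ee Ex s x by (auto simp: ennreal_leI)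
    have "\<phi> (\<theta> e + \<theta> x') = \<phi> (\<theta> 1 + \<theta> x')" using key[of x'] x' x by simp
    hence "\<phi> (ennreal (te + s)) = \<phi> (ennreal (tb + s))"
      using x' Ee Eb tb0 tbe s by (simp add: ennreal_plus)
    thus "\<psi> (r + D) = \<psi> r" unfolding \<psi>_def s_def D_def by (simp add: algebra_simps)
  qed
  have chain: "tb + te + real n * D \<le> tb + tx + D \<Longrightarrow> \<psi> (tb + te + real n * D) = \<psi> (tb + te)" for n
  proof (induction n)
    case 0 then show ?case by simp
  next
    case (Suc n)
    have h: "tb + te + real n * D \<le> tb + tx" using Suc.prems by (simp add: algebra_simps)
    have "\<psi> (tb + te + real (Suc n) * D) = \<psi> ((tb + te + real n * D) + D)" by (simp add: algebra_simps)
    also have "\<dots> = \<psi> (tb + te + real n * D)" by (rule shift) (use h D0 in auto)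
    also have "\<dots> = \<psi> (tb + te)" using Suc.IH h D0 by simp
    finally show ?case .
  qed
  define n where "n = nat \<lceil>(tx - te) / D\<rceil>"
  have q0: "(tx - te) / D \<ge> 0" using tex D0 by simp
  have n1: "real n \<ge> (tx - te) / D" unfolding n_def using q0 by linarith
  have n2: "real n < (tx - te) / D + 1" unfolding n_def using q0 by linarith
  have n1': "real n * D \<ge> tx - te" using n1 D0 by (simp add: field_simps)
  have n2': "real n * D < tx - te + D" using n2 D0 by (simp add: field_simps)
  have "\<psi> (tb + te + real n * D) = \<psi> (tb + te)" by (rule chain) (use n2' in auto)
  moreover have "\<psi> (tb + te + real n * D) \<le> \<psi> (tb + tx)" unfolding \<psi>_def
    by (rule ph_mono) (use n1' in \<open>simp add: ennreal_leI\<close>)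
  moreover have "\<psi> (tb + te) = F e" unfolding \<psi>_def using FO[OF eI] Eb Ee tb0 tbe
    by (simp add: ennreal_plus add.commute)
  moreover have "\<psi> (tb + tx) = F x" unfolding \<psi>_def using FO[OF xI] Eb Ex tb0 tbe tex
    by (simp add: ennreal_plus add.commute)
  ultimately show False using x Fe0 by simp
qed
end
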